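(* Let $(X_1,\le_1)$, $(X_2,\le_2)$ be partially ordered sets with directed completions $(\overline X_1,\iota_1)$, $(\overline X_2,\iota_2)$. Then the directed completion of $X_1\times X_2$ with the product order is $\overline X_1\times\overline X_2$ with the product order, together with the map $(x_1,x_2)\mapsto(\iota_1(x_1),\iota_2(x_2))$.
   Context: The product order on $X_1\times X_2$: $(a_1,a_2)\le(b_1,b_2)$ iff $a_1\le_1b_1$ and $a_2\le_2b_2$. A subset $D$ of a partially ordered set is directed if every finite subset of $D$ (including the empty one) has an upper bound in $D$. A partially ordered set is a dcpo if every directed subset has a supremum. A map $T$ between partially ordered sets has the Monotone Convergence Property (Mcp) if for every directed $D$ having a supremum, $T(D)$ has a supremum and $T(\sup D)=\sup T(D)$. A directed completion of $(X,\le)$ is a dcpo $(\overline X,\bar\le)$ together with a map $\iota:X\to\overline X$ with the Mcp such that for every dcpo $Z$ and every map $T:X\to Z$ with the Mcp there is a unique map $\bar T:\overline X\to Z$ with the Mcp satisfying $\bar T\circ\iota=T$. *)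

theory Defs
  imports Main
begin

definition poset :: "'a set \<Rightarrow> ('a \<Rightarrow> 'a \<Rightarrow> bool) \<Rightarrow> bool" where
  "poset A le \<longleftrightarrow>
     (\<forall>x\<in>A. le x x) \<and>
     (\<forall>x\<in>A. \<forall>y\<in>A. le x y \<and> le y x \<longrightarrow> x = y) \<and>
     (\<forall>x\<in>A. \<forall>y\<in>A. \<forall>z\<in>A. le x y \<and> le y z \<longrightarrow> le x z)"

definition prod_le :: "('a \<Rightarrow> 'a \<Rightarrow> bool) \<Rightarrow> ('b \<Rightarrow> 'b \<Rightarrow> bool) \<Rightarrow> 'a \<times> 'b \<Rightarrow> 'a \<times> 'b \<Rightarrow> bool" where
  "prod_le le1 le2 p q \<longleftrightarrow> le1 (fst p) (fst q) \<and> le2 (snd p) (snd q)"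

definition is_sup :: "'a set \<Rightarrow> ('a \<Rightarrow> 'a \<Rightarrow> bool) \<Rightarrow> 'a set \<Rightarrow> 'a \<Rightarrow> bool" where
  "is_sup A le S s \<longleftrightarrow>
     s \<in> A \<and> (\<forall>x\<in>S. le x s) \<and> (\<forall>u\<in>A. (\<forall>x\<in>S. le x u) \<longrightarrow> le s u)"

definition has_sup :: "'a set \<Rightarrow> ('a \<Rightarrow> 'a \<Rightarrow> bool) \<Rightarrow> 'a set \<Rightarrow> bool" where
  "has_sup A le S \<longleftrightarrow> (\<exists>s. is_sup A le S s)"

text \<open>Directed subsets: every finite subset (including the empty one) has an upper bound in D.\<close>

definition directed :: "'a set \<Rightarrow> ('a \<Rightarrow> 'a \<Rightarrow> bool) \<Rightarrow> 'a set \<Rightarrow> bool" where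
  "directed A le D \<longleftrightarrow>
     D \<subseteq> A \<and> (\<forall>F. finite F \<and> F \<subseteq> D \<longrightarrow> (\<exists>u\<in>D. \<forall>x\<in>F. le x u))"

definition dcpo :: "'a set \<Rightarrow> ('a \<Rightarrow> 'a \<Rightarrow> bool) \<Rightarrow> bool" where
  "dcpo A le \<longleftrightarrow> poset A le \<and> (\<forall>D. directed A le D \<longrightarrow> has_sup A le D)"

definition mcp :: "'a set \<Rightarrow> ('a \<Rightarrow> 'a \<Rightarrow> bool) \<Rightarrow> 'b set \<Rightarrow> ('b \<Rightarrow> 'b \<Rightarrow> bool) \<Rightarrow> ('a \<Rightarrow> 'b) \<Rightarrow> bool" where
  "mcp A le B leB T \<longleftrightarrow>
     (\<forall>x\<in>A. T x \<in> B) \<and>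
     (\<forall>D s. directed A le D \<and> is_sup A le D s \<longrightarrow> is_sup B leB (T ` D) (T s))"

text \<open>Directed completion, with the universal property quantified over all dcpos Z
  whose elements live in the type 'z (given by the TYPE argument).  Maps are compared
  (for uniqueness) on the carrier only.\<close>

definition directed_completion ::
  "'z itself \<Rightarrow> 'a set \<Rightarrow> ('a \<Rightarrow> 'a \<Rightarrow> bool) \<Rightarrow> 'b set \<Rightarrow> ('b \<Rightarrow> 'b \<Rightarrow> bool) \<Rightarrow> ('a \<Rightarrow> 'b) \<Rightarrow> bool"
where
  "directed_completion _ X le Xb leb \<iota> \<longleftrightarrow>
     dcpo Xb leb \<and> mcp X le Xb leb \<iota> \<and>
     (\<forall>(Z :: 'z set) leZ T. dcpo Z leZ \<and> mcp X le Z leZ T \<longrightarrow>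
        (\<exists>Tb. mcp Xb leb Z leZ Tb \<and> (\<forall>x\<in>X. Tb (\<iota> x) = T x) \<and>
           (\<forall>U. mcp Xb leb Z leZ U \<and> (\<forall>x\<in>X. U (\<iota> x) = T x) \<longrightarrow> (\<forall>y\<in>Xb. U y = Tb y))))"

end

theory Submission
  imports Defs
begin


lemma poset_trans: "poset A le \<Longrightarrow> x\<in>A \<Longrightarrow> y\<in>A \<Longrightarrow> z\<in>A \<Longrightarrow> le x y \<Longrightarrow> le y z \<Longrightarrow> le x z"
  unfolding poset_def by blast
lemma poset_refl: "poset A le \<Longrightarrow> x\<in>A \<Longrightarrow> le x x"
  unfolding poset_def by blast

lemma sup_unique: "poset A le \<Longrightarrow> is_sup A le S s \<Longrightarrow> is_sup A le S t \<Longrightarrow> s = t"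
  unfolding poset_def is_sup_def by blast

lemma sup_sub: "is_sup A le S s \<Longrightarrow> B \<subseteq> A \<Longrightarrow> s \<in> B \<Longrightarrow> is_sup B le S s"
  unfolding is_sup_def by blast

lemma mcp_into: "mcp A le B leB T \<Longrightarrow> x\<in>A \<Longrightarrow> T x \<in> B"
  unfolding mcp_def by blast
lemma mcp_sup: "mcp A le B leB T \<Longrightarrow> directed A le D \<Longrightarrow> is_sup A le D s \<Longrightarrow> is_sup B leB (T`D) (T s)"
  unfolding mcp_def by blast

lemma mcp_mono:
  assumes "poset A le" "mcp A le B leB T" "x\<in>A" "y\<in>A" "le x y"
  shows "leB (T x) (T y)"
proof -
  have d: "directed A le {x,y}" using assms unfolding directed_def
    using poset_refl[OF assms(1) assms(4)] by (intro conjI allI impI bexI[of _ y]) auto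
  have s: "is_sup A le {x,y} y" using assms unfolding is_sup_def by (auto intro: poset_refl)
  show ?thesis using mcp_sup[OF assms(2) d s] unfolding is_sup_def by auto
qed

lemma directed_image:
  assumes "poset A le" "mcp A le B leB T" "directed A le D"
  shows "directed B leB (T`D)"
  unfolding directed_def
proof (intro conjI allI impI)
  show "T ` D \<subseteq> B" using assms unfolding directed_def mcp_def by blast
  fix F assume F: "finite F \<and> F \<subseteq> T ` D"
  then obtain F' where F': "F' \<subseteq> D" "finite F'" "F = T ` F'"
    by (meson finite_subset_image)
  then obtain u where u: "u \<in> D" "\<forall>x\<in>F'. le x u" using assms(3) unfolding directed_def by blast
  have DA: "D \<subseteq> A" using assms(3) unfolding directed_def by blast
  show "\<exists>u\<in>T ` D. \<forall>x\<in>F. leB x u"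
  proof (intro bexI[of _ "T u"])
    show "T u \<in> T ` D" using u by blast
    show "\<forall>x\<in>F. leB x (T u)"
    proof
      fix x assume "x \<in> F"
      then obtain y where y: "y \<in> F'" "x = T y" using F' by blast
      thus "leB x (T u)" using mcp_mono[OF assms(1,2), of y u] u DA F' by auto
    qed
  qed
qed

lemma mcp_cong:
  assumes "mcp A le B leB f" "\<forall>x\<in>A. f x = g x"
  shows "mcp A le B leB g"
  unfolding mcp_def
proof (intro conjI allI impI)
  show "\<forall>x\<in>A. g x \<in> B" using assms unfolding mcp_def by auto
  fix D s assume a: "directed A le D \<and> is_sup A le D s"
  hence "D \<subseteq> A" "s \<in> A" unfolding directed_def is_sup_def by auto
  hence "g ` D = f ` D" "g s = f s" using assms(2) by (simp_all add: subset_iff)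
  thus "is_sup B leB (g ` D) (g s)" using mcp_sup[OF assms(1)] a by simp
qed

lemma dsup:
  assumes pZ: "poset Z leZ" and inZ: "\<forall>i\<in>I. \<forall>j\<in>J. f i j \<in> Z"
    and m: "is_sup Z leZ {f i j |i j. i \<in> I \<and> j \<in> J} m"
    and r: "\<forall>i\<in>I. is_sup Z leZ (f i ` J) (r i)"
  shows "is_sup Z leZ (r ` I) m"
proof -
  have mZ: "m \<in> Z" and mub: "\<And>i j. i \<in> I \<Longrightarrow> j \<in> J \<Longrightarrow> leZ (f i j) m"
    and mle: "\<And>u. u \<in> Z \<Longrightarrow> (\<And>i j. i \<in> I \<Longrightarrow> j \<in> J \<Longrightarrow> leZ (f i j) u) \<Longrightarrow> leZ m u"
    using m unfolding is_sup_def by blast+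
  have rZ: "\<And>i. i \<in> I \<Longrightarrow> r i \<in> Z" and rub: "\<And>i j. i \<in> I \<Longrightarrow> j \<in> J \<Longrightarrow> leZ (f i j) (r i)"
    and rle: "\<And>i u. i \<in> I \<Longrightarrow> u \<in> Z \<Longrightarrow> (\<And>j. j \<in> J \<Longrightarrow> leZ (f i j) u) \<Longrightarrow> leZ (r i) u"
    using r unfolding is_sup_def by blast+
  show ?thesis unfolding is_sup_def
  proof (intro conjI ballI impI)
    show "m \<in> Z" by (rule mZ)
    fix x assume "x \<in> r ` I"
    then obtain i where i: "i \<in> I" "x = r i" by blast
    show "leZ x m" unfolding i(2) by (rule rle[OF i(1) mZ mub[OF i(1)]])
  next
    fix u assume u: "u \<in> Z" "\<forall>x\<in>r ` I. leZ x u"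
    show "leZ m u"
    proof (rule mle[OF u(1)])
      fix i j assume ij: "i \<in> I" "j \<in> J"
      have "leZ (r i) u" using u ij by blast
      thus "leZ (f i j) u" using poset_trans[OF pZ, of "f i j" "r i" u] rub[OF ij] rZ[OF ij(1)] inZ ij u(1) by blast
    qed
  qed
qed

lemma dir2:
  assumes pZ: "poset Z leZ" and I: "directed A1 le1 I" and J: "directed A2 le2 J"
    and inZ: "\<forall>i\<in>I. \<forall>j\<in>J. f i j \<in> Z"
    and m1: "\<forall>i\<in>I. \<forall>i'\<in>I. \<forall>j\<in>J. le1 i i' \<longrightarrow> leZ (f i j) (f i' j)"
    and m2: "\<forall>i\<in>I. \<forall>j\<in>J. \<forall>j'\<in>J. le2 j j' \<longrightarrow> leZ (f i j) (f i j')"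
  shows "directed Z leZ {f i j |i j. i \<in> I \<and> j \<in> J}"
  unfolding directed_def
proof (intro conjI allI impI)
  show "{f i j |i j. i \<in> I \<and> j \<in> J} \<subseteq> Z" using inZ by blast
  fix F assume F: "finite F \<and> F \<subseteq> {f i j |i j. i \<in> I \<and> j \<in> J}"
  have eq: "{f i j |i j. i \<in> I \<and> j \<in> J} = case_prod f ` (I \<times> J)" by auto
  obtain F' where F': "F' \<subseteq> I \<times> J" "finite F'" "F = case_prod f ` F'"
    using F unfolding eq by (meson finite_subset_image)
  have "finite (fst ` F')" "fst ` F' \<subseteq> I" using F' by auto
  then obtain a where a: "a \<in> I" "\<forall>x\<in>fst ` F'. le1 x a" using I unfolding directed_def by blast
  have "finite (snd ` F')" "snd ` F' \<subseteq> J" using F' by auto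
  then obtain b where b: "b \<in> J" "\<forall>x\<in>snd ` F'. le2 x b" using J unfolding directed_def by blast
  show "\<exists>u\<in>{f i j |i j. i \<in> I \<and> j \<in> J}. \<forall>x\<in>F. leZ x u"
  proof (intro bexI[of _ "f a b"] ballI)
    show "f a b \<in> {f i j |i j. i \<in> I \<and> j \<in> J}" using a b by blast
    fix x assume "x \<in> F"
    then obtain i j where ij: "(i,j) \<in> F'" "x = f i j" using F' by auto
    have ij2: "i \<in> I" "j \<in> J" using ij F' by auto
    have "i \<in> fst ` F'" "j \<in> snd ` F'" using ij(1) by force+
    hence "le1 i a" "le2 j b" using a b by auto
    hence "leZ (f i j) (f a j)" "leZ (f a j) (f a b)" using m1 m2 ij2 a b by auto
    moreover have "f i j \<in> Z" "f a j \<in> Z" "f a b \<in> Z" using inZ ij2 a b by auto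
    ultimately show "leZ x (f a b)" using poset_trans[OF pZ, of "f i j" "f a j" "f a b"] ij by simp
  qed
qed

lemma cofinal:
  assumes pZ: "poset Z leZ" "S \<subseteq> S'" "S' \<subseteq> Z" "\<forall>y\<in>S'. \<exists>x\<in>S. leZ y x" "is_sup Z leZ S' m"
  shows "is_sup Z leZ S m"
  unfolding is_sup_def
proof (intro conjI ballI impI)
  show "m \<in> Z" using assms(5) unfolding is_sup_def by blast
  show "\<And>x. x \<in> S \<Longrightarrow> leZ x m" using assms(2,5) unfolding is_sup_def by blast
  fix u assume u: "u \<in> Z" "\<forall>x\<in>S. leZ x u"
  have "\<forall>y\<in>S'. leZ y u"
  proof
    fix y assume y: "y \<in> S'"
    then obtain x where x: "x \<in> S" "leZ y x" using assms(4) by blast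
    have "x \<in> Z" "y \<in> Z" using x y assms(2,3) by auto
    then show "leZ y u" using poset_trans[OF assms(1), of y x u] x u by simp
  qed
  moreover have "\<forall>u\<in>Z. (\<forall>x\<in>S'. leZ x u) \<longrightarrow> leZ m u" using assms(5) unfolding is_sup_def by simp
  ultimately show "leZ m u" using u by simp
qed


lemma sup_prod:
  "is_sup (A1 \<times> A2) (prod_le le1 le2) S s \<longleftrightarrow>
     is_sup A1 le1 (fst ` S) (fst s) \<and> is_sup A2 le2 (snd ` S) (snd s)"
proof
  assume a: "is_sup (A1 \<times> A2) (prod_le le1 le2) S s"
  have s: "fst s \<in> A1" "snd s \<in> A2" "\<forall>x\<in>S. le1 (fst x) (fst s) \<and> le2 (snd x) (snd s)"
    using a unfolding is_sup_def prod_le_def by auto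
  have l: "\<And>u. u \<in> A1 \<times> A2 \<Longrightarrow> (\<forall>x\<in>S. prod_le le1 le2 x u) \<Longrightarrow> prod_le le1 le2 s u"
    using a unfolding is_sup_def by blast
  show "is_sup A1 le1 (fst ` S) (fst s) \<and> is_sup A2 le2 (snd ` S) (snd s)"
    unfolding is_sup_def
  proof (intro conjI ballI impI)
    fix u assume "u \<in> A1" "\<forall>x\<in>fst ` S. le1 x u"
    thus "le1 (fst s) u" using l[of "(u, snd s)"] s unfolding prod_le_def by auto
  next
    fix u assume "u \<in> A2" "\<forall>x\<in>snd ` S. le2 x u"
    thus "le2 (snd s) u" using l[of "(fst s, u)"] s unfolding prod_le_def by auto
  qed (use s in auto)
next
  assume "is_sup A1 le1 (fst ` S) (fst s) \<and> is_sup A2 le2 (snd ` S) (snd s)"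
  thus "is_sup (A1 \<times> A2) (prod_le le1 le2) S s"
    unfolding is_sup_def prod_le_def by (auto simp: mem_Times_iff)
qed

lemma dir_fst: "directed (A1 \<times> A2) (prod_le le1 le2) D \<Longrightarrow> directed A1 le1 (fst ` D)"
  unfolding directed_def
proof (intro conjI allI impI)
  assume d: "D \<subseteq> A1 \<times> A2 \<and> (\<forall>F. finite F \<and> F \<subseteq> D \<longrightarrow> (\<exists>u\<in>D. \<forall>x\<in>F. prod_le le1 le2 x u))"
  thus "fst ` D \<subseteq> A1" by auto
  fix F assume F: "finite F \<and> F \<subseteq> fst ` D"
  then obtain F' where F': "F' \<subseteq> D" "finite F'" "F = fst ` F'" by (meson finite_subset_image)
  then obtain u where "u \<in> D" "\<forall>x\<in>F'. prod_le le1 le2 x u" using d by blast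
  thus "\<exists>u\<in>fst ` D. \<forall>x\<in>F. le1 x u" using F' unfolding prod_le_def by auto
qed

lemma dir_snd: "directed (A1 \<times> A2) (prod_le le1 le2) D \<Longrightarrow> directed A2 le2 (snd ` D)"
  unfolding directed_def
proof (intro conjI allI impI)
  assume d: "D \<subseteq> A1 \<times> A2 \<and> (\<forall>F. finite F \<and> F \<subseteq> D \<longrightarrow> (\<exists>u\<in>D. \<forall>x\<in>F. prod_le le1 le2 x u))"
  thus "snd ` D \<subseteq> A2" by auto
  fix F assume F: "finite F \<and> F \<subseteq> snd ` D"
  then obtain F' where F': "F' \<subseteq> D" "finite F'" "F = snd ` F'" by (meson finite_subset_image)
  then obtain u where "u \<in> D" "\<forall>x\<in>F'. prod_le le1 le2 x u" using d by blast
  thus "\<exists>u\<in>snd ` D. \<forall>x\<in>F. le2 x u" using F' unfolding prod_le_def by auto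
qed

lemma dir_nonempty: "directed A le D \<Longrightarrow> D \<noteq> {}"
  unfolding directed_def by blast

lemma slice1:
  assumes m: "mcp (A1 \<times> A2) (prod_le le1 le2) Z leZ U" and y: "y \<in> A2" "le2 y y"
  shows "mcp A1 le1 Z leZ (\<lambda>x. U (x, y))"
  unfolding mcp_def
proof (intro conjI allI impI ballI)
  fix x assume "x \<in> A1" thus "U (x, y) \<in> Z" using m y unfolding mcp_def by blast
next
  fix D s assume a: "directed A1 le1 D \<and> is_sup A1 le1 D s"
  have ne: "D \<noteq> {}" using a dir_nonempty by blast
  have d: "directed (A1 \<times> A2) (prod_le le1 le2) (D \<times> {y})"
    using a y unfolding directed_def prod_le_def
  proof (intro conjI allI impI)
    fix F assume F: "finite F \<and> F \<subseteq> D \<times> {y}"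
    hence "finite (fst ` F)" "fst ` F \<subseteq> D" by auto
    then obtain u where "u \<in> D" "\<forall>x\<in>fst ` F. le1 x u" using a unfolding directed_def by blast
    thus "\<exists>u\<in>D \<times> {y}. \<forall>x\<in>F. le1 (fst x) (fst u) \<and> le2 (snd x) (snd u)"
      using F y by (intro bexI[of _ "(u,y)"]) auto
  qed (auto simp: directed_def)
  have "is_sup (A1 \<times> A2) (prod_le le1 le2) (D \<times> {y}) (s, y)"
    unfolding sup_prod using a ne y by (simp add: is_sup_def)
  moreover have "U ` (D \<times> {y}) = (\<lambda>x. U (x, y)) ` D" by auto
  ultimately show "is_sup Z leZ ((\<lambda>x. U (x, y)) ` D) (U (s, y))"
    using mcp_sup[OF m d] by simp
qed



lemma slice2:
  assumes m: "mcp (A1 \<times> A2) (prod_le le1 le2) Z leZ U" and y: "y \<in> A1" "le1 y y"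
  shows "mcp A2 le2 Z leZ (\<lambda>x. U (y, x))"
  unfolding mcp_def
proof (intro conjI allI impI ballI)
  fix x assume "x \<in> A2" thus "U (y, x) \<in> Z" using m y unfolding mcp_def by blast
next
  fix D s assume a: "directed A2 le2 D \<and> is_sup A2 le2 D s"
  have ne: "D \<noteq> {}" using a dir_nonempty by blast
  have d: "directed (A1 \<times> A2) (prod_le le1 le2) ({y} \<times> D)"
    using a y unfolding directed_def prod_le_def
  proof (intro conjI allI impI)
    fix F assume F: "finite F \<and> F \<subseteq> {y} \<times> D"
    hence "finite (snd ` F)" "snd ` F \<subseteq> D" by auto
    then obtain u where "u \<in> D" "\<forall>x\<in>snd ` F. le2 x u" using a unfolding directed_def by blast
    thus "\<exists>u\<in>{y} \<times> D. \<forall>x\<in>F. le1 (fst x) (fst u) \<and> le2 (snd x) (snd u)"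
      using F y by (intro bexI[of _ "(y,u)"]) auto
  qed (auto simp: directed_def)
  have "is_sup (A1 \<times> A2) (prod_le le1 le2) ({y} \<times> D) (y, s)"
    unfolding sup_prod using a ne y by (simp add: is_sup_def)
  moreover have "U ` ({y} \<times> D) = (\<lambda>x. U (y, x)) ` D" by auto
  ultimately show "is_sup Z leZ ((\<lambda>x. U (y, x)) ` D) (U (y, s))"
    using mcp_sup[OF m d] by simp
qed

lemma poset_prod:
  assumes p1: "poset A1 le1" and p2: "poset A2 le2"
  shows "poset (A1 \<times> A2) (prod_le le1 le2)"
  unfolding poset_def
proof (intro conjI ballI impI)
  fix x assume "x \<in> A1 \<times> A2"
  thus "prod_le le1 le2 x x" using poset_refl[OF p1] poset_refl[OF p2] unfolding prod_le_def by auto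
next
  fix x y assume "x \<in> A1 \<times> A2" "y \<in> A1 \<times> A2" "prod_le le1 le2 x y \<and> prod_le le1 le2 y x"
  thus "x = y" using sup_unique p1 p2 unfolding prod_le_def poset_def
    by (simp add: prod_eq_iff mem_Times_iff)
next
  fix x y z assume "x \<in> A1 \<times> A2" "y \<in> A1 \<times> A2" "z \<in> A1 \<times> A2"
    "prod_le le1 le2 x y \<and> prod_le le1 le2 y z"
  thus "prod_le le1 le2 x z" using poset_trans[OF p1] poset_trans[OF p2] unfolding prod_le_def
    by (simp add: mem_Times_iff) blast
qed

lemma dcpo_prod:
  assumes "dcpo A1 le1" "dcpo A2 le2"
  shows "dcpo (A1 \<times> A2) (prod_le le1 le2)"
  unfolding dcpo_def
proof (intro conjI allI impI)
  show "poset (A1 \<times> A2) (prod_le le1 le2)" using assms poset_prod unfolding dcpo_def by blast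
  fix D assume D: "directed (A1 \<times> A2) (prod_le le1 le2) D"
  obtain s1 where s1: "is_sup A1 le1 (fst ` D) s1"
    using dir_fst[OF D] assms(1) unfolding dcpo_def has_sup_def by blast
  obtain s2 where s2: "is_sup A2 le2 (snd ` D) s2"
    using dir_snd[OF D] assms(2) unfolding dcpo_def has_sup_def by blast
  have "is_sup (A1 \<times> A2) (prod_le le1 le2) D (s1, s2)" unfolding sup_prod using s1 s2 by simp
  thus "has_sup (A1 \<times> A2) (prod_le le1 le2) D" unfolding has_sup_def by blast
qed

lemma mcp_prod:
  assumes "mcp X1 le1 Y1 leY1 f1" "mcp X2 le2 Y2 leY2 f2"
  shows "mcp (X1 \<times> X2) (prod_le le1 le2) (Y1 \<times> Y2) (prod_le leY1 leY2) (\<lambda>(x1, x2). (f1 x1, f2 x2))"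
  unfolding mcp_def
proof (intro conjI allI impI ballI)
  fix x assume "x \<in> X1 \<times> X2" thus "(case x of (x1, x2) \<Rightarrow> (f1 x1, f2 x2)) \<in> Y1 \<times> Y2"
    using mcp_into[OF assms(1)] mcp_into[OF assms(2)] by (auto split: prod.splits)
next
  fix D s assume a: "directed (X1 \<times> X2) (prod_le le1 le2) D \<and> is_sup (X1 \<times> X2) (prod_le le1 le2) D s"
  have 1: "is_sup Y1 leY1 (f1 ` fst ` D) (f1 (fst s))"
    using mcp_sup[OF assms(1) dir_fst] a unfolding sup_prod by blast
  have 2: "is_sup Y2 leY2 (f2 ` snd ` D) (f2 (snd s))"
    using mcp_sup[OF assms(2) dir_snd] a unfolding sup_prod by blast
  have e1: "fst ` (\<lambda>(x1, x2). (f1 x1, f2 x2)) ` D = f1 ` fst ` D" unfolding image_image by (simp add: case_prod_beta)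
  have e2: "snd ` (\<lambda>(x1, x2). (f1 x1, f2 x2)) ` D = f2 ` snd ` D" unfolding image_image by (simp add: case_prod_beta)
  show "is_sup (Y1 \<times> Y2) (prod_le leY1 leY2) ((\<lambda>(x1, x2). (f1 x1, f2 x2)) ` D)
          (case s of (x1, x2) \<Rightarrow> (f1 x1, f2 x2))"
    unfolding sup_prod e1 e2 using 1 2 by (cases s) simp
qed

lemma ext_exists:
  fixes Z :: "'z set"
  assumes "directed_completion TYPE('z) X le Xb leb \<iota>" "dcpo Z leZ" "mcp X le Z leZ T"
  shows "\<exists>Tb. mcp Xb leb Z leZ Tb \<and> (\<forall>x\<in>X. Tb (\<iota> x) = T x)"
  using assms unfolding directed_completion_def by blast

lemma ext_unique:
  fixes Z :: "'z set"
  assumes "directed_completion TYPE('z) X le Xb leb \<iota>" "dcpo Z leZ" "mcp X le Z leZ T"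
    "mcp Xb leb Z leZ U" "\<forall>x\<in>X. U (\<iota> x) = T x"
    "mcp Xb leb Z leZ V" "\<forall>x\<in>X. V (\<iota> x) = T x" "y \<in> Xb"
  shows "U y = V y"
proof -
  obtain Tb where "\<forall>U. mcp Xb leb Z leZ U \<and> (\<forall>x\<in>X. U (\<iota> x) = T x) \<longrightarrow> (\<forall>y\<in>Xb. U y = Tb y)"
    using assms(1-3) unfolding directed_completion_def by blast
  hence h: "\<And>W. mcp Xb leb Z leZ W \<Longrightarrow> \<forall>x\<in>X. W (\<iota> x) = T x \<Longrightarrow> W y = Tb y"
    using assms(8) by blast
  have "U y = Tb y" by (rule h[OF assms(4,5)])
  moreover have "V y = Tb y" by (rule h[OF assms(6,7)])
  ultimately show ?thesis by simp
qed

lemma density: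
  fixes Xb :: "'b set"
  assumes dc: "directed_completion TYPE('b) X le Xb leb \<iota>"
    and PX: "P \<subseteq> Xb" and iP: "\<forall>x\<in>X. \<iota> x \<in> P"
    and cl: "\<And>D s. directed Xb leb D \<Longrightarrow> D \<subseteq> P \<Longrightarrow> is_sup Xb leb D s \<Longrightarrow> s \<in> P"
  shows "Xb \<subseteq> P"
proof -
  have dX: "dcpo Xb leb" and mi: "mcp X le Xb leb \<iota>" using dc unfolding directed_completion_def by auto
  have pX: "poset Xb leb" using dX unfolding dcpo_def by simp
  have pP: "poset P leb" using pX PX unfolding poset_def by (meson subsetD)
  have dirP: "\<And>D. directed P leb D \<Longrightarrow> directed Xb leb D" using PX unfolding directed_def by (meson order_trans)
  have supP: "\<exists>s. is_sup Xb leb D s \<and> is_sup P leb D s" if D: "directed P leb D" for D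
  proof -
    have "has_sup Xb leb D" using dX dirP[OF D] unfolding dcpo_def by simp
    then obtain s where s: "is_sup Xb leb D s" unfolding has_sup_def by blast
    have DP: "D \<subseteq> P" using D unfolding directed_def by simp
    have "s \<in> P" by (rule cl[OF dirP[OF D] DP s])
    hence "is_sup P leb D s" by (rule sup_sub[OF s PX])
    thus ?thesis using s by blast
  qed
  have dP: "dcpo P leb" unfolding dcpo_def has_sup_def
  proof (intro conjI allI impI)
    show "poset P leb" by (rule pP)
    fix D assume "directed P leb D"
    thus "\<exists>s. is_sup P leb D s" using supP by blast
  qed
  have mP: "mcp X le P leb \<iota>" unfolding mcp_def
  proof (intro conjI allI impI)
    show "\<forall>x\<in>X. \<iota> x \<in> P" by (rule iP)
    fix D s assume a: "directed X le D \<and> is_sup X le D s"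
    hence "s \<in> X" unfolding is_sup_def by simp
    hence "\<iota> s \<in> P" using iP by simp
    moreover have "is_sup Xb leb (\<iota> ` D) (\<iota> s)" using mcp_sup[OF mi] a by simp
    ultimately show "is_sup P leb (\<iota> ` D) (\<iota> s)" using sup_sub[OF _ PX] by simp
  qed
  obtain Tb where Tb: "mcp Xb leb P leb Tb" "\<forall>x\<in>X. Tb (\<iota> x) = \<iota> x"
    using ext_exists[OF dc dP mP] by blast
  have mTb: "mcp Xb leb Xb leb Tb" unfolding mcp_def
  proof (intro conjI allI impI ballI)
    fix x assume "x \<in> Xb" thus "Tb x \<in> Xb" using mcp_into[OF Tb(1)] PX by auto
  next
    fix D s assume a: "directed Xb leb D \<and> is_sup Xb leb D s"
    have 1: "is_sup P leb (Tb ` D) (Tb s)" using mcp_sup[OF Tb(1)] a by simp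
    have d: "directed P leb (Tb ` D)" using directed_image[OF pX Tb(1)] a by simp
    obtain t where t: "is_sup Xb leb (Tb ` D) t" "is_sup P leb (Tb ` D) t" using supP[OF d] by blast
    have "t = Tb s" using sup_unique[OF pP t(2) 1] .
    thus "is_sup Xb leb (Tb ` D) (Tb s)" using t by simp
  qed
  have mid: "mcp Xb leb Xb leb (\<lambda>x. x)" unfolding mcp_def by simp
  show ?thesis
  proof
    fix y assume y: "y \<in> Xb"
    have "Tb y = y" using ext_unique[OF dc dX mi mTb _ mid _ y] Tb(2) by simp
    thus "y \<in> P" using mcp_into[OF Tb(1) y] by simp
  qed
qed



lemma univ_prod:
  fixes Z :: "'z set" and Xb1 :: "'b1 set" and Xb2 :: "'b2 set"
  assumes dc1: "directed_completion TYPE('z) X1 le1 Xb1 leb1 \<iota>1"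
    and dc1': "directed_completion TYPE('b1) X1 le1 Xb1 leb1 \<iota>1"
    and dc2: "directed_completion TYPE('z) X2 le2 Xb2 leb2 \<iota>2"
    and dc2': "directed_completion TYPE('b2) X2 le2 Xb2 leb2 \<iota>2"
    and p1: "poset X1 le1" and p2: "poset X2 le2"
    and dZ: "dcpo Z leZ" and mT: "mcp (X1 \<times> X2) (prod_le le1 le2) Z leZ T"
  shows "\<exists>Tb. mcp (Xb1 \<times> Xb2) (prod_le leb1 leb2) Z leZ Tb \<and>
     (\<forall>x\<in>X1 \<times> X2. Tb ((\<lambda>(x1, x2). (\<iota>1 x1, \<iota>2 x2)) x) = T x) \<and>
     (\<forall>U. mcp (Xb1 \<times> Xb2) (prod_le leb1 leb2) Z leZ U \<and>
          (\<forall>x\<in>X1 \<times> X2. U ((\<lambda>(x1, x2). (\<iota>1 x1, \<iota>2 x2)) x) = T x) \<longrightarrow>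
          (\<forall>y\<in>Xb1 \<times> Xb2. U y = Tb y))"
proof -
  have pZ: "poset Z leZ" using dZ unfolding dcpo_def by simp
  have db1: "dcpo Xb1 leb1" and mi1: "mcp X1 le1 Xb1 leb1 \<iota>1"
    using dc1 unfolding directed_completion_def by auto
  have db2: "dcpo Xb2 leb2" and mi2: "mcp X2 le2 Xb2 leb2 \<iota>2"
    using dc2 unfolding directed_completion_def by auto
  have pb1: "poset Xb1 leb1" using db1 unfolding dcpo_def by simp
  have pb2: "poset Xb2 leb2" using db2 unfolding dcpo_def by simp
  have sT1: "mcp X1 le1 Z leZ (\<lambda>x1. T (x1, x2))" if "x2 \<in> X2" for x2
    using slice1[OF mT that poset_refl[OF p2 that]] .
  have sT2: "mcp X2 le2 Z leZ (\<lambda>x2. T (x1, x2))" if "x1 \<in> X1" for x1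
    using slice2[OF mT that poset_refl[OF p1 that]] .
  define g where "g x2 = (SOME G. mcp Xb1 leb1 Z leZ G \<and> (\<forall>x1\<in>X1. G (\<iota>1 x1) = T (x1, x2)))" for x2
  have g: "mcp Xb1 leb1 Z leZ (g x2) \<and> (\<forall>x1\<in>X1. g x2 (\<iota>1 x1) = T (x1, x2))" if "x2 \<in> X2" for x2
    unfolding g_def using ext_exists[OF dc1 dZ sT1[OF that]] by (rule someI_ex)
  have gm: "mcp Xb1 leb1 Z leZ (g x2)" if "x2 \<in> X2" for x2 using g[OF that] by simp
  have gi: "g x2 (\<iota>1 x1) = T (x1, x2)" if "x2 \<in> X2" "x1 \<in> X1" for x1 x2 using g[OF that(1)] that(2) by simp

  have hm: "Xb1 \<subseteq> {y1 \<in> Xb1. mcp X2 le2 Z leZ (\<lambda>x2. g x2 y1)}"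
  proof (rule density[OF dc1'])
    show "{y1 \<in> Xb1. mcp X2 le2 Z leZ (\<lambda>x2. g x2 y1)} \<subseteq> Xb1" by blast
    show "\<forall>x\<in>X1. \<iota>1 x \<in> {y1 \<in> Xb1. mcp X2 le2 Z leZ (\<lambda>x2. g x2 y1)}"
    proof
      fix x1 assume x1: "x1 \<in> X1"
      have "mcp X2 le2 Z leZ (\<lambda>x2. g x2 (\<iota>1 x1))"
        by (rule mcp_cong[OF sT2[OF x1]]) (simp add: gi x1)
      thus "\<iota>1 x1 \<in> {y1 \<in> Xb1. mcp X2 le2 Z leZ (\<lambda>x2. g x2 y1)}" using mcp_into[OF mi1 x1] by simp
    qed
  next
    fix D y assume D: "directed Xb1 leb1 D" and DP: "D \<subseteq> {y1 \<in> Xb1. mcp X2 le2 Z leZ (\<lambda>x2. g x2 y1)}"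
      and y: "is_sup Xb1 leb1 D y"
    have yX: "y \<in> Xb1" using y unfolding is_sup_def by simp
    have Dm: "mcp X2 le2 Z leZ (\<lambda>x2. g x2 d)" if "d \<in> D" for d using DP that by blast
    have DX: "D \<subseteq> Xb1" using D unfolding directed_def by simp
    have "mcp X2 le2 Z leZ (\<lambda>x2. g x2 y)" unfolding mcp_def
    proof (intro conjI allI impI ballI)
      fix x2 assume "x2 \<in> X2" thus "g x2 y \<in> Z" using mcp_into[OF gm yX] by simp
    next
      fix E e assume a: "directed X2 le2 E \<and> is_sup X2 le2 E e"
      have E: "directed X2 le2 E" and e: "is_sup X2 le2 E e" using a by auto
      have EX: "E \<subseteq> X2" using E unfolding directed_def by simp
      have eX: "e \<in> X2" using e unfolding is_sup_def by simp
      have inZ: "\<forall>d\<in>D. \<forall>x\<in>E. g x d \<in> Z" using mcp_into[OF gm] EX DX by blast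
      have mo1: "\<forall>i\<in>D. \<forall>i'\<in>D. \<forall>j\<in>E. leb1 i i' \<longrightarrow> leZ (g j i) (g j i')"
        using mcp_mono[OF pb1 gm] EX DX by blast
      have mo2: "\<forall>i\<in>D. \<forall>j\<in>E. \<forall>j'\<in>E. le2 j j' \<longrightarrow> leZ (g j i) (g j' i)"
        using mcp_mono[OF p2 Dm] EX by blast
      have "directed Z leZ {g x d |d x. d \<in> D \<and> x \<in> E}"
        using dir2[where f="\<lambda>d x. g x d", OF pZ D E] inZ mo1 mo2 by simp
      then obtain m where m: "is_sup Z leZ {g x d |d x. d \<in> D \<and> x \<in> E} m"
        using dZ unfolding dcpo_def has_sup_def by blast
      have r1: "is_sup Z leZ ((\<lambda>d. g e d) ` D) m"
        by (rule dsup[where f="\<lambda>d x. g x d", OF pZ _ m])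
           (use inZ mcp_sup[OF Dm E e] in auto)
      have r2: "is_sup Z leZ (g e ` D) (g e y)" using mcp_sup[OF gm[OF eX] D y] .
      have me: "m = g e y" using sup_unique[OF pZ r1 r2[unfolded]] by (simp add: image_def)
      have m': "is_sup Z leZ {g x d |x d. x \<in> E \<and> d \<in> D} m" using m by (smt (verit) Collect_cong)
      have "is_sup Z leZ ((\<lambda>x. g x y) ` E) m"
        by (rule dsup[where f="\<lambda>x d. g x d", OF pZ _ m'])
           (use inZ mcp_sup[OF gm D y] EX in auto)
      thus "is_sup Z leZ ((\<lambda>x2. g x2 y) ` E) (g e y)" using me by simp
    qed
    thus "y \<in> {y1 \<in> Xb1. mcp X2 le2 Z leZ (\<lambda>x2. g x2 y1)}" using yX by simp
  qed
  have hm': "mcp X2 le2 Z leZ (\<lambda>x2. g x2 y1)" if "y1 \<in> Xb1" for y1 using hm that by blast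
  define k where "k y1 = (SOME K. mcp Xb2 leb2 Z leZ K \<and> (\<forall>x2\<in>X2. K (\<iota>2 x2) = g x2 y1))" for y1
  have k: "mcp Xb2 leb2 Z leZ (k y1) \<and> (\<forall>x2\<in>X2. k y1 (\<iota>2 x2) = g x2 y1)" if "y1 \<in> Xb1" for y1
    unfolding k_def using ext_exists[OF dc2 dZ hm'[OF that]] by (rule someI_ex)
  have km: "mcp Xb2 leb2 Z leZ (k y1)" if "y1 \<in> Xb1" for y1 using k[OF that] by simp
  have ki: "k y1 (\<iota>2 x2) = g x2 y1" if "y1 \<in> Xb1" "x2 \<in> X2" for y1 x2 using k[OF that(1)] that(2) by simp

  have km1: "Xb2 \<subseteq> {y2 \<in> Xb2. mcp Xb1 leb1 Z leZ (\<lambda>y1. k y1 y2)}"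
  proof (rule density[OF dc2'])
    show "{y2 \<in> Xb2. mcp Xb1 leb1 Z leZ (\<lambda>y1. k y1 y2)} \<subseteq> Xb2" by blast
    show "\<forall>x\<in>X2. \<iota>2 x \<in> {y2 \<in> Xb2. mcp Xb1 leb1 Z leZ (\<lambda>y1. k y1 y2)}"
    proof
      fix x2 assume x2: "x2 \<in> X2"
      have "mcp Xb1 leb1 Z leZ (\<lambda>y1. k y1 (\<iota>2 x2))"
        by (rule mcp_cong[OF gm[OF x2]]) (simp add: ki x2)
      thus "\<iota>2 x2 \<in> {y2 \<in> Xb2. mcp Xb1 leb1 Z leZ (\<lambda>y1. k y1 y2)}" using mcp_into[OF mi2 x2] by simp
    qed
  next
    fix E y assume E: "directed Xb2 leb2 E" and EP: "E \<subseteq> {y2 \<in> Xb2. mcp Xb1 leb1 Z leZ (\<lambda>y1. k y1 y2)}"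
      and y: "is_sup Xb2 leb2 E y"
    have yX: "y \<in> Xb2" using y unfolding is_sup_def by simp
    have Em: "mcp Xb1 leb1 Z leZ (\<lambda>y1. k y1 e)" if "e \<in> E" for e using EP that by blast
    have EX: "E \<subseteq> Xb2" using E unfolding directed_def by simp
    have "mcp Xb1 leb1 Z leZ (\<lambda>y1. k y1 y)" unfolding mcp_def
    proof (intro conjI allI impI ballI)
      fix y1 assume "y1 \<in> Xb1" thus "k y1 y \<in> Z" using mcp_into[OF km yX] by simp
    next
      fix D s assume a: "directed Xb1 leb1 D \<and> is_sup Xb1 leb1 D s"
      have D: "directed Xb1 leb1 D" and s: "is_sup Xb1 leb1 D s" using a by auto
      have DX: "D \<subseteq> Xb1" using D unfolding directed_def by simp
      have sX: "s \<in> Xb1" using s unfolding is_sup_def by simp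
      have inZ: "\<forall>d\<in>D. \<forall>x\<in>E. k d x \<in> Z" using mcp_into[OF km] EX DX by blast
      have mo1: "\<forall>i\<in>D. \<forall>i'\<in>D. \<forall>j\<in>E. leb1 i i' \<longrightarrow> leZ (k i j) (k i' j)"
        using mcp_mono[OF pb1 Em] DX by blast
      have mo2: "\<forall>i\<in>D. \<forall>j\<in>E. \<forall>j'\<in>E. leb2 j j' \<longrightarrow> leZ (k i j) (k i j')"
        using mcp_mono[OF pb2 km] EX DX by blast
      have "directed Z leZ {k d x |d x. d \<in> D \<and> x \<in> E}"
        using dir2[where f="\<lambda>d x. k d x", OF pZ D E] inZ mo1 mo2 by simp
      then obtain m where m: "is_sup Z leZ {k d x |d x. d \<in> D \<and> x \<in> E} m"
        using dZ unfolding dcpo_def has_sup_def by blast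
      have r1: "is_sup Z leZ ((\<lambda>d. k d y) ` D) m"
        by (rule dsup[where f="\<lambda>d x. k d x", OF pZ _ m])
           (use inZ mcp_sup[OF km E y] DX in auto)
      have m': "is_sup Z leZ {k d x |x d. x \<in> E \<and> d \<in> D} m" using m by (smt (verit) Collect_cong)
      have r2: "is_sup Z leZ ((\<lambda>x. k s x) ` E) m"
        by (rule dsup[where f="\<lambda>x d. k d x", OF pZ _ m'])
           (use inZ mcp_sup[OF Em D s] in auto)
      have r3: "is_sup Z leZ (k s ` E) (k s y)" using mcp_sup[OF km[OF sX] E y] .
      have me: "m = k s y" using sup_unique[OF pZ r2 r3[unfolded]] by (simp add: image_def)
      show "is_sup Z leZ ((\<lambda>y1. k y1 y) ` D) (k s y)" using r1 me by simp
    qed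
    thus "y \<in> {y2 \<in> Xb2. mcp Xb1 leb1 Z leZ (\<lambda>y1. k y1 y2)}" using yX by simp
  qed
  have km1': "mcp Xb1 leb1 Z leZ (\<lambda>y1. k y1 y2)" if "y2 \<in> Xb2" for y2 using km1 that by blast

  define Tb where "Tb p = k (fst p) (snd p)" for p
  have mTb: "mcp (Xb1 \<times> Xb2) (prod_le leb1 leb2) Z leZ Tb" unfolding mcp_def
  proof (intro conjI allI impI ballI)
    fix p assume "p \<in> Xb1 \<times> Xb2" thus "Tb p \<in> Z" unfolding Tb_def using mcp_into[OF km] by auto
  next
    fix D s assume a: "directed (Xb1 \<times> Xb2) (prod_le leb1 leb2) D \<and> is_sup (Xb1 \<times> Xb2) (prod_le leb1 leb2) D s"
    have D1: "directed Xb1 leb1 (fst ` D)" and D2: "directed Xb2 leb2 (snd ` D)"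
      using a dir_fst dir_snd by blast+
    have s1: "is_sup Xb1 leb1 (fst ` D) (fst s)" and s2: "is_sup Xb2 leb2 (snd ` D) (snd s)"
      using a unfolding sup_prod by auto
    have D1X: "fst ` D \<subseteq> Xb1" using D1 unfolding directed_def by simp
    have D2X: "snd ` D \<subseteq> Xb2" using D2 unfolding directed_def by simp
    have DX: "D \<subseteq> Xb1 \<times> Xb2" using a unfolding directed_def by simp
    have s1X: "fst s \<in> Xb1" using s1 unfolding is_sup_def by simp
    have s2X: "snd s \<in> Xb2" using s2 unfolding is_sup_def by simp
    have inZ: "\<forall>d\<in>fst ` D. \<forall>x\<in>snd ` D. k d x \<in> Z" using mcp_into[OF km] D1X D2X by blast
    have mo1: "\<forall>i\<in>fst ` D. \<forall>i'\<in>fst ` D. \<forall>j\<in>snd ` D. leb1 i i' \<longrightarrow> leZ (k i j) (k i' j)"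
      using mcp_mono[OF pb1 km1'] D1X D2X by blast
    have mo2: "\<forall>i\<in>fst ` D. \<forall>j\<in>snd ` D. \<forall>j'\<in>snd ` D. leb2 j j' \<longrightarrow> leZ (k i j) (k i j')"
      using mcp_mono[OF pb2 km] D1X D2X by blast
    have "directed Z leZ {k d x |d x. d \<in> fst ` D \<and> x \<in> snd ` D}"
      using dir2[where f="\<lambda>d x. k d x", OF pZ D1 D2] inZ mo1 mo2 by simp
    then obtain m where m: "is_sup Z leZ {k d x |d x. d \<in> fst ` D \<and> x \<in> snd ` D} m"
      using dZ unfolding dcpo_def has_sup_def by blast
    have r1: "is_sup Z leZ ((\<lambda>d. k d (snd s)) ` fst ` D) m"
      by (rule dsup[where f="\<lambda>d x. k d x", OF pZ _ m])
         (use inZ mcp_sup[OF km D2 s2] D1X in auto)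
    have r2: "is_sup Z leZ ((\<lambda>d. k d (snd s)) ` fst ` D) (k (fst s) (snd s))"
      using mcp_sup[OF km1'[OF s2X] D1 s1] .
    have me: "m = Tb s" unfolding Tb_def using sup_unique[OF pZ r1 r2] .
    have cof: "is_sup Z leZ (Tb ` D) m"
    proof (rule cofinal[OF pZ _ _ _ m])
      show "Tb ` D \<subseteq> {k d x |d x. d \<in> fst ` D \<and> x \<in> snd ` D}" unfolding Tb_def by force
      show "{k d x |d x. d \<in> fst ` D \<and> x \<in> snd ` D} \<subseteq> Z" using inZ by blast
      show "\<forall>y\<in>{k d x |d x. d \<in> fst ` D \<and> x \<in> snd ` D}. \<exists>x\<in>Tb ` D. leZ y x"
      proof
        fix z assume "z \<in> {k d x |d x. d \<in> fst ` D \<and> x \<in> snd ` D}"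
        then obtain p q where pq: "p \<in> D" "q \<in> D" "z = k (fst p) (snd q)" by blast
        obtain u where u: "u \<in> D" "prod_le leb1 leb2 p u" "prod_le leb1 leb2 q u"
          using a pq unfolding directed_def by (metis empty_subsetI finite.emptyI finite_insert insert_iff insert_subset)
        have uX: "fst u \<in> Xb1" "snd u \<in> Xb2" using u DX by auto
        have pX: "fst p \<in> Xb1" "snd q \<in> Xb2" using pq DX by auto
        have "leZ (k (fst p) (snd q)) (k (fst u) (snd q))"
          using mcp_mono[OF pb1 km1'[OF pX(2)] pX(1) uX(1)] u(2) unfolding prod_le_def by simp
        moreover have "leZ (k (fst u) (snd q)) (k (fst u) (snd u))"
          using mcp_mono[OF pb2 km[OF uX(1)] pX(2) uX(2)] u(3) unfolding prod_le_def by simp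
        moreover have "k (fst p) (snd q) \<in> Z" "k (fst u) (snd q) \<in> Z" "k (fst u) (snd u) \<in> Z"
          using mcp_into[OF km] pX uX by auto
        ultimately have "leZ z (Tb u)" unfolding Tb_def pq(3) using poset_trans[OF pZ] by blast
        thus "\<exists>x\<in>Tb ` D. leZ z x" using u(1) by blast
      qed
    qed
    show "is_sup Z leZ (Tb ` D) (Tb s)" using cof me by simp
  qed
  have ext: "\<forall>x\<in>X1 \<times> X2. Tb ((\<lambda>(x1, x2). (\<iota>1 x1, \<iota>2 x2)) x) = T x"
  proof
    fix x assume "x \<in> X1 \<times> X2"
    then obtain x1 x2 where x: "x = (x1, x2)" "x1 \<in> X1" "x2 \<in> X2" by blast
    show "Tb ((\<lambda>(x1, x2). (\<iota>1 x1, \<iota>2 x2)) x) = T x"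
      using ki[OF mcp_into[OF mi1 x(2)] x(3)] gi[OF x(3) x(2)] unfolding Tb_def x(1) by simp
  qed
  have uniq: "\<forall>y\<in>Xb1 \<times> Xb2. U y = Tb y"
    if U: "mcp (Xb1 \<times> Xb2) (prod_le leb1 leb2) Z leZ U"
      and Ue: "\<forall>x\<in>X1 \<times> X2. U ((\<lambda>(x1, x2). (\<iota>1 x1, \<iota>2 x2)) x) = T x" for U
  proof
    fix y assume "y \<in> Xb1 \<times> Xb2"
    then obtain y1 y2 where y: "y = (y1, y2)" "y1 \<in> Xb1" "y2 \<in> Xb2" by blast
    have 1: "U (y1', \<iota>2 x2) = g x2 y1'" if "x2 \<in> X2" "y1' \<in> Xb1" for x2 y1'
    proof -
      have i2: "\<iota>2 x2 \<in> Xb2" using mcp_into[OF mi2 that(1)] .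
      show ?thesis
      proof (rule ext_unique[OF dc1 dZ sT1[OF that(1)] slice1[OF U i2 poset_refl[OF pb2 i2]] _ gm[OF that(1)] _ that(2)])
        show "\<forall>x\<in>X1. U (\<iota>1 x, \<iota>2 x2) = T (x, x2)" using Ue that(1) by auto
        show "\<forall>x\<in>X1. g x2 (\<iota>1 x) = T (x, x2)" using gi that(1) by simp
      qed
    qed
    have "U (y1, y2) = k y1 y2"
    proof (rule ext_unique[OF dc2 dZ hm'[OF y(2)] slice2[OF U y(2) poset_refl[OF pb1 y(2)]] _ km[OF y(2)] _ y(3)])
      show "\<forall>x\<in>X2. U (y1, \<iota>2 x) = g x y1" using 1 y(2) by simp
      show "\<forall>x\<in>X2. k y1 (\<iota>2 x) = g x y1" using ki y(2) by simp
    qed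
    thus "U y = Tb y" unfolding Tb_def y(1) by simp
  qed
  show ?thesis using mTb ext uniq by blast
qed


theorem mainTheorem7:
  fixes X1 :: "'a1 set" and le1 :: "'a1 \<Rightarrow> 'a1 \<Rightarrow> bool"
    and X2 :: "'a2 set" and le2 :: "'a2 \<Rightarrow> 'a2 \<Rightarrow> bool"
    and Xb1 :: "'b1 set" and leb1 :: "'b1 \<Rightarrow> 'b1 \<Rightarrow> bool" and \<iota>1 :: "'a1 \<Rightarrow> 'b1"
    and Xb2 :: "'b2 set" and leb2 :: "'b2 \<Rightarrow> 'b2 \<Rightarrow> bool" and \<iota>2 :: "'a2 \<Rightarrow> 'b2"
  assumes "poset X1 le1" and "poset X2 le2"
    and "directed_completion TYPE('z) X1 le1 Xb1 leb1 \<iota>1"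
    and "directed_completion TYPE('b1) X1 le1 Xb1 leb1 \<iota>1"
    and "directed_completion TYPE('z) X2 le2 Xb2 leb2 \<iota>2"
    and "directed_completion TYPE('b2) X2 le2 Xb2 leb2 \<iota>2"
  shows "directed_completion TYPE('z) (X1 \<times> X2) (prod_le le1 le2)
           (Xb1 \<times> Xb2) (prod_le leb1 leb2) (\<lambda>(x1, x2). (\<iota>1 x1, \<iota>2 x2))"
proof -
  have db1: "dcpo Xb1 leb1" and mi1: "mcp X1 le1 Xb1 leb1 \<iota>1"
    using assms(3) unfolding directed_completion_def by auto
  have db2: "dcpo Xb2 leb2" and mi2: "mcp X2 le2 Xb2 leb2 \<iota>2"
    using assms(5) unfolding directed_completion_def by auto
  show ?thesis unfolding directed_completion_def
  proof (intro conjI allI impI)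
    show "dcpo (Xb1 \<times> Xb2) (prod_le leb1 leb2)" by (rule dcpo_prod[OF db1 db2])
    show "mcp (X1 \<times> X2) (prod_le le1 le2) (Xb1 \<times> Xb2) (prod_le leb1 leb2) (\<lambda>(x1, x2). (\<iota>1 x1, \<iota>2 x2))"
      by (rule mcp_prod[OF mi1 mi2])
    fix Z :: "'z set" and leZ T
    assume "dcpo Z leZ \<and> mcp (X1 \<times> X2) (prod_le le1 le2) Z leZ T"
    thus "\<exists>Tb. mcp (Xb1 \<times> Xb2) (prod_le leb1 leb2) Z leZ Tb \<and>
     (\<forall>x\<in>X1 \<times> X2. Tb ((\<lambda>(x1, x2). (\<iota>1 x1, \<iota>2 x2)) x) = T x) \<and>
     (\<forall>U. mcp (Xb1 \<times> Xb2) (prod_le leb1 leb2) Z leZ U \<and>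
          (\<forall>x\<in>X1 \<times> X2. U ((\<lambda>(x1, x2). (\<iota>1 x1, \<iota>2 x2)) x) = T x) \<longrightarrow>
          (\<forall>y\<in>Xb1 \<times> Xb2. U y = Tb y))"
      using univ_prod[OF assms(3-6,1,2)] by blast
  qed
qed

end
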